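(* Let $K$ be an algebraically closed field complete with respect to a non-archimedean absolute value, let $\lambda_3\in K$, let $\sqrt{1-\lambda_3}$ denote a fixed square root, and let $\varphi(z)=z+\sqrt{1-\lambda_3}+\frac1z$. Let $\xi$ be the unique point of $\mathbb{P}^1_{\mathrm{Berk}}$ with $w_\varphi(\xi)=1$. (A) If $|\lambda_3|\le1$, then $\xi=\zeta_G$ and $\xi$ satisfies (W1). (B) If $|\lambda_3|>1$, then $\xi=\zeta_{D(0,\sqrt{|\lambda_3|})}$ and $\xi$ satisfies (W3).
   Context: $\varphi$ has degree 2, fixed points $\infty$ (double, multiplier $1$) and $-1/\sqrt{1-\lambda_3}$ (multiplier $\lambda_3$). $\mathbb{P}^1_{\mathrm{Berk}}$ is the Berkovich projective line over $K$; $\zeta_{D(a,r)}$ is the point corresponding to the disc $D(a,r)=\{x:|x-a|\le r\}$, $\zeta_G=\zeta_{D(0,1)}$. Let $\mathcal{O},\mathfrak{m},k$ be the valuation ring, maximal ideal, residue field. For a type II point $P=\gamma(\zeta_G)$, $\gamma\in\mathrm{PGL}_2(K)$, the reduction $\tilde\varphi_P$ is the reduction mod $\mathfrak{m}$ of a normalized lift (coefficients in $\mathcal{O}$, one a unit) of $\gamma^{-1}\circ\varphi\circ\gamma$, after cancelling common factors; $P$ is fixed by $\varphi$ iff $\tilde\varphi_P$ is nonconstant. $\Gamma_{\mathrm{Fix}}$ is the tree spanned by the classical fixed points; $\Gamma_{\mathrm{Fix,Repel}}$ the tree spanned by classical fixed points and type II fixed points with $\deg\tilde\varphi_P\ge2$,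 $v(P)$ the valence there. Weight $w_\varphi(P)$: for type II fixed $P$, $\deg\tilde\varphi_P-1+N(P)$, $N(P)$ the number of tangent directions at $P$ containing classical fixed points that are moved by $\varphi_*$; for a branch point of $\Gamma_{\mathrm{Fix}}$ moved by $\varphi$, $v(P)-2$; else $0$. For degree 2 exactly one point has positive weight, equal to 1. (W1): $P$ fixed with $\deg\tilde\varphi_P\ge2$. (W3): $P$ fixed, $\tilde\varphi_P$ conjugate over $k$ to $z+\tilde a$, $\tilde a\in k^\times$, and $P\in\Gamma_{\mathrm{Fix}}$. *)

theory Defs
  imports Complex_Main "HOL-Computational_Algebra.Polynomial"
begin

definition nonarch_abs :: "('k::field \<Rightarrow> real) \<Rightarrow> bool" where
  "nonarch_abs av \<longleftrightarrow>
     (\<forall>x. 0 \<le> av x) \<and> (\<forall>x. av x = 0 \<longleftrightarrow> x = 0) \<and>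
     (\<forall>x y. av (x * y) = av x * av y) \<and>
     (\<forall>x y. av (x + y) \<le> max (av x) (av y))"

definition complete_abs :: "('k::field \<Rightarrow> real) \<Rightarrow> bool" where
  "complete_abs av \<longleftrightarrow>
     (\<forall>X :: nat \<Rightarrow> 'k.
        (\<forall>e>0. \<exists>N. \<forall>m\<ge>N. \<forall>n\<ge>N. av (X m - X n) < e) \<longrightarrow>
        (\<exists>L. \<forall>e>0. \<exists>N. \<forall>n\<ge>N. av (X n - L) < e))"

definition alg_closed :: "'k::field itself \<Rightarrow> bool" where
  "alg_closed _ \<longleftrightarrow> (\<forall>p :: 'k poly. 1 \<le> degree p \<longrightarrow> (\<exists>x. poly p x = 0))"

text \<open>A presentation of the residue field k = O/m: a map red : K -> k whose restriction
  to the valuation ring O = {|x| <= 1} is a surjective ring homomorphism with kernel m.\<close>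
definition residue_map :: "('k::field \<Rightarrow> real) \<Rightarrow> ('k \<Rightarrow> 'r::field) \<Rightarrow> bool" where
  "residue_map av red \<longleftrightarrow>
     (\<forall>x y. av x \<le> 1 \<longrightarrow> av y \<le> 1 \<longrightarrow>
         red (x + y) = red x + red y \<and> red (x * y) = red x * red y) \<and>
     red 0 = 0 \<and> red 1 = 1 \<and>
     (\<forall>x. av x \<le> 1 \<longrightarrow> (red x = 0 \<longleftrightarrow> av x < 1)) \<and>
     (\<forall>z. \<exists>x. av x \<le> 1 \<and> red x = z)"

definition value_group :: "('k::field \<Rightarrow> real) \<Rightarrow> real set" where
  "value_group av = {av c | c. c \<noteq> 0}"

definition disc :: "('k::field \<Rightarrow> real) \<Rightarrow> 'k \<Rightarrow> real \<Rightarrow> 'k set" where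
  "disc av a r = {x. av (x - a) \<le> r}"

text \<open>The type II point zeta_{D(a,r)} is represented by the disc D(a,r), r in |K^x|.\<close>
definition typeII :: "('k::field \<Rightarrow> real) \<Rightarrow> 'k set set" where
  "typeII av = {disc av a r | a r. r \<in> value_group av}"

definition zeta_G :: "('k::field \<Rightarrow> real) \<Rightarrow> 'k set" where
  "zeta_G av = disc av 0 1"

text \<open>An affine chart gamma(z) = a + c z with gamma(zeta_G) = P.\<close>
definition chart :: "('k::field \<Rightarrow> real) \<Rightarrow> 'k set \<Rightarrow> 'k \<times> 'k" where
  "chart av P = (SOME (a, c). c \<noteq> 0 \<and> P = disc av a (av c))"

text \<open>A rational map F/G is given by a pair of polynomials (F, G) (coprime);
  its homogeneous lift has the same coefficients.\<close>
type_synonym 'a ratmap = "'a poly \<times> 'a poly"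

definition phi_map :: "'k::field \<Rightarrow> 'k ratmap" where
  "phi_map s = ([:1, s, 1:], [:0, 1:])"   \<comment> \<open>z + s + 1/z = (z^2 + s z + 1)/z\<close>

text \<open>gamma^{-1} o Phi o gamma for gamma(z) = a + c z.\<close>
definition conj_affine :: "'k::field \<Rightarrow> 'k \<Rightarrow> 'k ratmap \<Rightarrow> 'k ratmap" where
  "conj_affine a c \<Phi> =
     (pcompose (fst \<Phi>) [:a, c:] - smult a (pcompose (snd \<Phi>) [:a, c:]),
      smult c (pcompose (snd \<Phi>) [:a, c:]))"

definition normalize_lift :: "('k::field \<Rightarrow> real) \<Rightarrow> 'k ratmap \<Rightarrow> 'k ratmap" where
  "normalize_lift av \<Phi> =
     (let C = set (coeffs (fst \<Phi>)) \<union> set (coeffs (snd \<Phi>));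
          M = Max (av ` C);
          e = (SOME e. e \<in> C \<and> av e = M)
      in (smult (inverse e) (fst \<Phi>), smult (inverse e) (snd \<Phi>)))"

definition lowest_terms :: "'r::field ratmap \<Rightarrow> 'r ratmap" where
  "lowest_terms \<Phi> = (SOME \<Psi>. coprime (fst \<Psi>) (snd \<Psi>) \<and> (fst \<Psi> \<noteq> 0 \<or> snd \<Psi> \<noteq> 0) \<and>
                         fst \<Phi> * snd \<Psi> = fst \<Psi> * snd \<Phi>)"

definition reduction :: "('k::field \<Rightarrow> real) \<Rightarrow> ('k \<Rightarrow> 'r::field) \<Rightarrow> 'k ratmap \<Rightarrow> 'k set \<Rightarrow> 'r ratmap" where
  "reduction av red \<Phi> P =
     (case chart av P of (a, c) \<Rightarrow>
        (let L = normalize_lift av (conj_affine a c \<Phi>)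
         in lowest_terms (map_poly red (fst L), map_poly red (snd L))))"

definition rat_deg :: "'a::zero ratmap \<Rightarrow> nat" where
  "rat_deg \<Psi> = max (degree (fst \<Psi>)) (degree (snd \<Psi>))"

definition red_deg :: "('k::field \<Rightarrow> real) \<Rightarrow> ('k \<Rightarrow> 'r::field) \<Rightarrow> 'k ratmap \<Rightarrow> 'k set \<Rightarrow> nat" where
  "red_deg av red \<Phi> P = rat_deg (reduction av red \<Phi> P)"

text \<open>P is fixed iff the reduction is nonconstant.\<close>
definition is_fixed :: "('k::field \<Rightarrow> real) \<Rightarrow> ('k \<Rightarrow> 'r::field) \<Rightarrow> 'k ratmap \<Rightarrow> 'k set \<Rightarrow> bool" where
  "is_fixed av red \<Phi> P \<longleftrightarrow> P \<in> typeII av \<and> 1 \<le> red_deg av red \<Phi> P"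

text \<open>Action of a rational map (in lowest terms) on P^1 = 'a option (None = infinity).\<close>
definition eval_P1 :: "'a::field ratmap \<Rightarrow> 'a option \<Rightarrow> 'a option" where
  "eval_P1 \<Psi> v = (case v of
      Some x \<Rightarrow> (if poly (snd \<Psi>) x = 0 then None
                 else Some (poly (fst \<Psi>) x / poly (snd \<Psi>) x))
    | None \<Rightarrow> (if snd \<Psi> = 0 \<or> degree (snd \<Psi>) < degree (fst \<Psi>) then None
              else if degree (fst \<Psi>) = degree (snd \<Psi>)
                   then Some (lead_coeff (fst \<Psi>) / lead_coeff (snd \<Psi>))
              else Some 0))"

definition fixed_classical :: "'k::field ratmap \<Rightarrow> 'k option set" where
  "fixed_classical \<Phi> =
     {Some z | z. poly (snd \<Phi>) z \<noteq> 0 \<and> poly (fst \<Phi>) z = z * poly (snd \<Phi>) z} \<union>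
     (if degree (snd \<Phi>) < degree (fst \<Phi>) then {None} else {})"

text \<open>Tangent directions at P = gamma(zeta_G) are labelled by P^1(k): the direction
  containing a classical point x is the reduction of gamma^{-1}(x).\<close>
definition direction :: "('k::field \<Rightarrow> real) \<Rightarrow> ('k \<Rightarrow> 'r::field) \<Rightarrow> 'k set \<Rightarrow> 'k option \<Rightarrow> 'r option" where
  "direction av red P x =
     (case chart av P of (a, c) \<Rightarrow>
        (case x of None \<Rightarrow> None
         | Some y \<Rightarrow> (if av (y - a) \<le> av c then Some (red ((y - a) / c)) else None)))"

definition fix_dirs :: "('k::field \<Rightarrow> real) \<Rightarrow> ('k \<Rightarrow> 'r::field) \<Rightarrow> 'k ratmap \<Rightarrow> 'k set \<Rightarrow> 'r option set" where
  "fix_dirs av red \<Phi> P = direction av red P ` fixed_classical \<Phi>"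

text \<open>A type II point lies in Gamma_Fix iff at least two of its directions contain classical
  fixed points; its valence in Gamma_Fix is the number of such directions.\<close>
definition in_Gamma_Fix :: "('k::field \<Rightarrow> real) \<Rightarrow> ('k \<Rightarrow> 'r::field) \<Rightarrow> 'k ratmap \<Rightarrow> 'k set \<Rightarrow> bool" where
  "in_Gamma_Fix av red \<Phi> P \<longleftrightarrow> P \<in> typeII av \<and> 2 \<le> card (fix_dirs av red \<Phi> P)"

definition valence_Fix :: "('k::field \<Rightarrow> real) \<Rightarrow> ('k \<Rightarrow> 'r::field) \<Rightarrow> 'k ratmap \<Rightarrow> 'k set \<Rightarrow> nat" where
  "valence_Fix av red \<Phi> P = card (fix_dirs av red \<Phi> P)"

text \<open>N(P): directions containing classical fixed points moved by phi_* (= reduction).\<close>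
definition N_moved :: "('k::field \<Rightarrow> real) \<Rightarrow> ('k \<Rightarrow> 'r::field) \<Rightarrow> 'k ratmap \<Rightarrow> 'k set \<Rightarrow> nat" where
  "N_moved av red \<Phi> P =
     card {v \<in> fix_dirs av red \<Phi> P. eval_P1 (reduction av red \<Phi> P) v \<noteq> v}"

definition weight :: "('k::field \<Rightarrow> real) \<Rightarrow> ('k \<Rightarrow> 'r::field) \<Rightarrow> 'k ratmap \<Rightarrow> 'k set \<Rightarrow> int" where
  "weight av red \<Phi> P =
     (if is_fixed av red \<Phi> P
      then int (red_deg av red \<Phi> P) - 1 + int (N_moved av red \<Phi> P)
      else if in_Gamma_Fix av red \<Phi> P \<and> 3 \<le> valence_Fix av red \<Phi> P
      then int (valence_Fix av red \<Phi> P) - 2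
      else 0)"

definition W1 :: "('k::field \<Rightarrow> real) \<Rightarrow> ('k \<Rightarrow> 'r::field) \<Rightarrow> 'k ratmap \<Rightarrow> 'k set \<Rightarrow> bool" where
  "W1 av red \<Phi> P \<longleftrightarrow> is_fixed av red \<Phi> P \<and> 2 \<le> red_deg av red \<Phi> P"

text \<open>(W3): the reduction is conjugate over k (by a Moebius map eta) to z + a, a <> 0.\<close>
definition W3 :: "('k::field \<Rightarrow> real) \<Rightarrow> ('k \<Rightarrow> 'r::field) \<Rightarrow> 'k ratmap \<Rightarrow> 'k set \<Rightarrow> bool" where
  "W3 av red \<Phi> P \<longleftrightarrow> is_fixed av red \<Phi> P \<and>
     (\<exists>t::'r. t \<noteq> 0 \<and> (\<exists>\<alpha> \<beta> \<gamma> \<delta>. \<alpha> * \<delta> - \<beta> * \<gamma> \<noteq> 0 \<and>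
        (\<forall>v. eval_P1 (reduction av red \<Phi> P) (eval_P1 ([:\<beta>, \<alpha>:], [:\<delta>, \<gamma>:]) v)
             = eval_P1 ([:\<beta>, \<alpha>:], [:\<delta>, \<gamma>:]) (eval_P1 ([:t, 1:], [:1:]) v)))) \<and>
     in_Gamma_Fix av red \<Phi> P"

end

theory Submission
  imports Defs
begin

section \<open>Valuation basics\<close>

lemma na_nonneg: "nonarch_abs av \<Longrightarrow> 0 \<le> av x"
  by (simp add: nonarch_abs_def)
lemma na_zero: "nonarch_abs av \<Longrightarrow> av x = 0 \<longleftrightarrow> x = 0"
  by (simp add: nonarch_abs_def)
lemma na_mult: "nonarch_abs av \<Longrightarrow> av (x * y) = av x * av y"
  by (simp add: nonarch_abs_def)
lemma na_add: "nonarch_abs av \<Longrightarrow> av (x + y) \<le> max (av x) (av y)"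
  by (simp add: nonarch_abs_def)

lemma na_one: assumes "nonarch_abs av" shows "av 1 = 1"
proof -
  have "av 1 = av 1 * av 1" using na_mult[OF assms, of 1 1] by simp
  moreover have "av 1 \<noteq> 0" using na_zero[OF assms, of 1] by simp
  ultimately show ?thesis by simp
qed

lemma na_minus_one: assumes "nonarch_abs av" shows "av (-1) = 1"
proof -
  have "av (-1) * av (-1) = 1" using na_mult[OF assms, of "-1" "-1"] na_one[OF assms] by simp
  moreover have "0 \<le> av (-1)" using na_nonneg[OF assms] .
  ultimately have "(av (-1) - 1) * (av (-1) + 1) = 0" "av (-1) + 1 \<noteq> 0"
    by (simp_all add: algebra_simps)
  then show ?thesis by simp
qed

lemma na_uminus: assumes "nonarch_abs av" shows "av (- x) = av x"
  using na_mult[OF assms, of "-1" x] na_minus_one[OF assms] by simp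

lemma na_diff: assumes "nonarch_abs av" shows "av (x - y) \<le> max (av x) (av y)"
  using na_add[OF assms, of x "-y"] na_uminus[OF assms, of y] by simp

lemma na_inverse: assumes "nonarch_abs av" shows "av (inverse x) = inverse (av x)"
proof (cases "x = 0")
  case True then show ?thesis using na_zero[OF assms, of 0] by simp
next
  case False
  have "av x * av (inverse x) = 1" using na_mult[OF assms, of x "inverse x"] False na_one[OF assms] by simp
  moreover have "av x \<noteq> 0" using False na_zero[OF assms] by simp
  ultimately show ?thesis by (metis inverse_unique mult.commute)
qed

lemma na_divide: assumes "nonarch_abs av" shows "av (x / y) = av x / av y"
  using na_mult[OF assms, of x "inverse y"] na_inverse[OF assms, of y] by (simp add: divide_inverse)

lemma na_power2: assumes "nonarch_abs av" shows "av (x ^ 2) = av x ^ 2"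
  using na_mult[OF assms, of x x] by (simp add: power2_eq_square)

lemma na_strict: assumes "nonarch_abs av" "av x < av y" shows "av (x + y) = av y"
proof -
  have a: "av (x + y) \<le> av y" using na_add[OF assms(1), of x y] assms(2) by simp
  have "av y \<le> max (av (x + y)) (av x)" using na_diff[OF assms(1), of "x + y" x] by simp
  then have "av y \<le> av (x + y)" using assms(2) by (auto simp: max_def split: if_splits)
  with a show ?thesis by simp
qed

lemma rm_add: "residue_map av red \<Longrightarrow> av x \<le> 1 \<Longrightarrow> av y \<le> 1 \<Longrightarrow> red (x + y) = red x + red y"
  by (simp add: residue_map_def)
lemma rm_mult: "residue_map av red \<Longrightarrow> av x \<le> 1 \<Longrightarrow> av y \<le> 1 \<Longrightarrow> red (x * y) = red x * red y"
  by (simp add: residue_map_def)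
lemma rm_zero: "residue_map av red \<Longrightarrow> red 0 = 0"
  by (simp add: residue_map_def)
lemma rm_one: "residue_map av red \<Longrightarrow> red 1 = 1"
  by (simp add: residue_map_def)
lemma rm_small: "residue_map av red \<Longrightarrow> av x < 1 \<Longrightarrow> red x = 0"
  by (simp add: residue_map_def)
lemma rm_unit: "residue_map av red \<Longrightarrow> av x = 1 \<Longrightarrow> red x \<noteq> 0"
  by (simp add: residue_map_def)

lemma O_mult: "nonarch_abs av \<Longrightarrow> av x \<le> 1 \<Longrightarrow> av y \<le> 1 \<Longrightarrow> av (x * y) \<le> 1"
  by (simp add: na_mult na_nonneg mult_le_one)
lemma O_add: "nonarch_abs av \<Longrightarrow> av x \<le> 1 \<Longrightarrow> av y \<le> 1 \<Longrightarrow> av (x + y) \<le> 1"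
  using na_add[of av x y] by simp

lemma rm_uminus: assumes "nonarch_abs av" "residue_map av red" "av x \<le> 1"
  shows "red (- x) = - red x"
proof -
  have "red (x + - x) = red x + red (- x)"
    by (rule rm_add[OF assms(2) assms(3)]) (simp add: na_uminus[OF assms(1)] assms(3))
  then show ?thesis using rm_zero[OF assms(2)] by (simp add: eq_neg_iff_add_eq_0 add.commute)
qed

lemma rm_diff: assumes "nonarch_abs av" "residue_map av red" "av x \<le> 1" "av y \<le> 1"
  shows "red (x - y) = red x - red y"
  using rm_add[OF assms(2), of x "-y"] rm_uminus[OF assms(1,2,4)] assms na_uminus[OF assms(1), of y]
  by simp

lemma conj_phi:
  "conj_affine a c (phi_map s) = ([:a*s+1, c*(a+s), c^2:], [:a*c, c^2:])"
  unfolding conj_affine_def phi_map_def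
  by (simp add: pcompose_pCons algebra_simps power2_eq_square)

lemma normalize_lift_max:
  fixes F G :: "'k::field poly"
  assumes na: "nonarch_abs av" and F: "\<forall>i. av (coeff F i) \<le> M" and G: "\<forall>i. av (coeff G i) \<le> M"
    and j: "av (coeff F j) = M" and M: "M > 0"
  shows "\<exists>e. av e = M \<and> normalize_lift av (F,G) = (smult (inverse e) F, smult (inverse e) G)"
proof -
  define C where "C = set (coeffs F) \<union> set (coeffs G)"
  have fin: "finite C" by (simp add: C_def)
  have "coeff F j \<noteq> 0" using j M na_zero[OF na, of 0] by auto
  then have "F \<noteq> 0" "j \<le> degree F" by (auto intro: le_degree)
  then have inC: "coeff F j \<in> C" unfolding C_def using coeff_in_coeffs by blast
  have le: "\<forall>y\<in>av ` C. y \<le> M"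
  proof
    fix y assume "y \<in> av ` C"
    then obtain x where x: "x \<in> C" "y = av x" by auto
    then have "x \<in> range (coeff F) \<or> x \<in> range (coeff G)" unfolding C_def range_coeff by auto
    then show "y \<le> M" using F G x by auto
  qed
  have Mx: "Max (av ` C) = M"
    by (rule Max_eqI) (use fin le inC j in auto)
  have ex: "\<exists>e. e \<in> C \<and> av e = Max (av ` C)" using inC j Mx by auto
  define e where "e = (SOME e. e \<in> C \<and> av e = Max (av ` C))"
  have "e \<in> C \<and> av e = Max (av ` C)" unfolding e_def by (rule someI_ex[OF ex])
  then have "av e = M" using Mx by simp
  moreover have "normalize_lift av (F,G) = (smult (inverse e) F, smult (inverse e) G)"
    by (simp add: normalize_lift_def Let_def e_def C_def)
  ultimately show ?thesis by blast
qed

lemma lowest_terms_char: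
  fixes N0 D0 h x y :: "'r::field poly"
  assumes bez: "N0 * x + D0 * y = 1" and nz: "N0 \<noteq> 0" "D0 \<noteq> 0" "h \<noteq> 0"
  shows "\<exists>k. is_unit k \<and> lowest_terms (h*N0, h*D0) = (k*N0, k*D0)"
proof -
  have cop: "coprime N0 D0"
  proof (rule coprimeI)
    fix c assume "c dvd N0" "c dvd D0"
    then have "c dvd N0 * x + D0 * y" by simp
    then show "is_unit c" using bez by simp
  qed
  define P where "P = (\<lambda>\<Psi>::'r poly \<times> 'r poly. coprime (fst \<Psi>) (snd \<Psi>) \<and> (fst \<Psi> \<noteq> 0 \<or> snd \<Psi> \<noteq> 0) \<and>
                         h*N0 * snd \<Psi> = fst \<Psi> * (h*D0))"
  have "P (N0, D0)" unfolding P_def using cop nz by (simp add: algebra_simps)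
  then have "P (SOME \<Psi>. P \<Psi>)" by (rule someI)
  moreover have "lowest_terms (h*N0, h*D0) = (SOME \<Psi>. P \<Psi>)" unfolding lowest_terms_def P_def by simp
  ultimately have "P (lowest_terms (h*N0, h*D0))" by simp
  then obtain A B where AB: "lowest_terms (h*N0, h*D0) = (A, B)" "coprime A B" "A \<noteq> 0 \<or> B \<noteq> 0"
      "h*N0*B = A*(h*D0)"
    unfolding P_def by (metis prod.collapse)
  have eq: "N0 * B = A * D0" using AB(4) nz(3) by (simp add: algebra_simps)
  have "A = A * (N0 * x + D0 * y)" using bez by simp
  also have "\<dots> = N0 * (A * x) + (A * D0) * y" by (simp add: algebra_simps)
  also have "\<dots> = N0 * (A * x + B * y)" using eq by (simp add: algebra_simps)
  finally obtain k where k: "A = N0 * k" by blast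
  have "N0 * B = N0 * (k * D0)" using eq k by (simp add: algebra_simps)
  then have B: "B = k * D0" using nz(1) by simp
  have "k dvd A" "k dvd B" using k B by simp_all
  then have u: "is_unit k" using AB(2) coprime_common_divisor by blast
  then show ?thesis using AB(1) k B by (auto simp: algebra_simps)
qed

lemma unit_poly_const:
  fixes k :: "'r::field poly"
  assumes "is_unit k" shows "\<exists>v. v \<noteq> 0 \<and> k = [:v:]"
proof -
  have "k \<noteq> 0" using assms by auto
  then have "degree k = 0" using is_unit_iff_degree assms by blast
  then obtain v where "k = [:v:]" using degree0_coeffs by blast
  then show ?thesis using \<open>k \<noteq> 0\<close> by auto
qed

lemma rat_deg_unit:
  fixes k N D :: "'r::field poly"
  assumes "is_unit k" shows "rat_deg (k*N, k*D) = rat_deg (N, D)"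
proof -
  obtain v where v: "v \<noteq> 0" "k = [:v:]" using unit_poly_const[OF assms] by blast
  then show ?thesis by (simp add: rat_deg_def)
qed

lemma eval_P1_unit:
  fixes k N D :: "'r::field poly"
  assumes "is_unit k" shows "eval_P1 (k*N, k*D) x = eval_P1 (N, D) x"
proof -
  obtain v where v: "v \<noteq> 0" "k = [:v:]" using unit_poly_const[OF assms] by blast
  then show ?thesis by (simp add: eval_P1_def split: option.splits)
qed

section \<open>Charts and fixed points\<close>

lemma chart_disc:
  assumes na: "nonarch_abs av" and w: "w \<noteq> 0"
  shows "\<exists>a c. chart av (disc av 0 (av w)) = (a,c) \<and> c \<noteq> 0 \<and> av c = av w \<and> av a \<le> av w"
proof -
  define Q where "Q = (\<lambda>(a::'a, c). c \<noteq> 0 \<and> disc av 0 (av w) = disc av a (av c))"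
  have "Q (0, w)" unfolding Q_def using w by simp
  then have "Q (SOME p. Q p)" by (rule someI)
  moreover have "chart av (disc av 0 (av w)) = (SOME p. Q p)" unfolding chart_def Q_def by simp
  ultimately obtain a c where ac: "chart av (disc av 0 (av w)) = (a,c)" "c \<noteq> 0"
     "disc av 0 (av w) = disc av a (av c)"
    unfolding Q_def by (metis (mono_tags, lifting) case_prod_beta prod.collapse)
  have mem: "\<And>x. av x \<le> av w \<longleftrightarrow> av (x - a) \<le> av c"
    using ac(3) unfolding disc_def by (auto simp: set_eq_iff)
  have h1: "av a \<le> av c" using mem[of 0] na_nonneg[OF na, of w] na_uminus[OF na, of a] na_zero[OF na, of 0] by simp
  have h2: "av (w - a) \<le> av c" using mem[of w] by simp
  have "av w \<le> max (av (w - a)) (av a)" using na_add[OF na, of "w - a" a] by simp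
  then have c1: "av w \<le> av c" using h1 h2 by simp
  have h3: "av a \<le> av w" using mem[of a] na_nonneg[OF na, of c] na_zero[OF na, of 0] by simp
  have h4: "av (a + c) \<le> av w" using mem[of "a + c"] by simp
  have "av c \<le> max (av (a + c)) (av a)" using na_diff[OF na, of "a + c" a] by simp
  then have "av c \<le> av w" using h3 h4 by simp
  with c1 ac h3 show ?thesis by auto
qed

lemma fixed_phi:
  "fixed_classical (phi_map s) = insert None (if s = 0 then {} else {Some (- inverse s)})"
proof -
  have d: "degree [:0, 1::'a:] < degree [:1, s, 1:]" by simp
  have "\<And>z::'a. (z \<noteq> 0 \<and> 1 + z * (s + z) = z * z) \<longleftrightarrow> (s \<noteq> 0 \<and> z = - inverse s)"
  proof -
    fix z :: 'a
    have "(1 + z * (s + z) = z * z) \<longleftrightarrow> s * z = -1" by (auto simp: algebra_simps eq_neg_iff_add_eq_0)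
    moreover have "s * z = -1 \<longleftrightarrow> (s \<noteq> 0 \<and> z = - inverse s)"
    proof
      assume h: "s * z = -1"
      then have "s \<noteq> 0" by auto
      moreover have "z = (s * z) / s" using \<open>s \<noteq> 0\<close> by simp
      then have "z = (-1) / s" using h by simp
      ultimately show "s \<noteq> 0 \<and> z = - inverse s" by (simp add: divide_inverse)
    qed auto
    ultimately show "(z \<noteq> 0 \<and> 1 + z * (s + z) = z * z) \<longleftrightarrow> (s \<noteq> 0 \<and> z = - inverse s)"
      by auto
  qed
  then show ?thesis unfolding fixed_classical_def phi_map_def using d
    by (auto simp: algebra_simps)
qed

lemma coeff_bound3:
  assumes "av x \<le> M" "av y \<le> M" "av z \<le> M" "av 0 \<le> M"
  shows "\<forall>i. av (coeff [:x, y, z:] i) \<le> M"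
proof
  fix i show "av (coeff [:x, y, z:] i) \<le> M"
    using assms by (cases i; cases "i - 1"; cases "i - 2") (auto simp: coeff_pCons split: nat.splits)
qed

lemma coeff_bound2:
  assumes "av x \<le> M" "av y \<le> M" "av 0 \<le> M"
  shows "\<forall>i. av (coeff [:x, y:] i) \<le> M"
proof
  fix i show "av (coeff [:x, y:] i) \<le> M"
    using assms by (cases i; cases "i - 1") (auto simp: coeff_pCons split: nat.splits)
qed

lemma map_red3:
  assumes "residue_map av red"
  shows "map_poly red (smult k [:x, y, z:]) = [:red (k*x), red (k*y), red (k*z):]"
  using rm_zero[OF assms] by (simp add: map_poly_pCons)

lemma map_red2:
  assumes "residue_map av red"
  shows "map_poly red (smult k [:x, y:]) = [:red (k*x), red (k*y):]"
  using rm_zero[OF assms] by (simp add: map_poly_pCons)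

section \<open>Case A\<close>

lemma filter_empty: "(\<forall>v\<in>A. f v = v) \<Longrightarrow> {v \<in> A. f v \<noteq> v} = {}" by auto


lemma caseA:
  fixes av :: "'k::field \<Rightarrow> real" and red :: "'k \<Rightarrow> 'r::field"
  assumes na: "nonarch_abs av" and rm: "residue_map av red" and s1: "av s \<le> 1"
  shows "zeta_G av \<in> typeII av \<and> weight av red (phi_map s) (zeta_G av) = 1 \<and>
         W1 av red (phi_map s) (zeta_G av)"
proof -
  have av1: "av 1 = 1" by (rule na_one[OF na])
  have av0: "av 0 = 0" using na_zero[OF na, of 0] by simp
  have Z: "zeta_G av = disc av 0 (av 1)" unfolding zeta_G_def av1 ..
  have T: "zeta_G av \<in> typeII av" unfolding Z typeII_def value_group_def
    by (intro CollectI exI[of _ 0] exI[of _ "av 1"]) auto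
  obtain a c where ch: "chart av (zeta_G av) = (a,c)" "c \<noteq> 0" "av c = 1" "av a \<le> 1"
    using chart_disc[OF na, of 1] unfolding Z av1 by auto
  define F where "F = [:a*s+1, c*(a+s), c^2:]"
  define G where "G = [:a*c, c^2:]"
  have cj: "conj_affine a c (phi_map s) = (F, G)" unfolding F_def G_def by (rule conj_phi)
  have avc2: "av (c^2) = 1" using na_power2[OF na, of c] ch by simp
  have Fb: "\<forall>i. av (coeff F i) \<le> 1" unfolding F_def
  proof (rule coeff_bound3)
    show "av (a*s+1) \<le> 1" using O_add[OF na O_mult[OF na ch(4) s1]] av1 by simp
    show "av (c*(a+s)) \<le> 1" using O_mult[OF na _ O_add[OF na ch(4) s1]] ch by simp
  qed (use avc2 av0 in auto)
  have Gb: "\<forall>i. av (coeff G i) \<le> 1" unfolding G_def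
  proof (rule coeff_bound2)
    show "av (a*c) \<le> 1" using O_mult[OF na ch(4)] ch by simp
  qed (use avc2 av0 in auto)
  have j: "av (coeff F 2) = 1" unfolding F_def using avc2 by (simp add: numeral_2_eq_2)
  obtain e where e: "av e = 1" "normalize_lift av (F,G) = (smult (inverse e) F, smult (inverse e) G)"
    using normalize_lift_max[OF na Fb Gb j] by auto
  have ie: "av (inverse e) = 1" using na_inverse[OF na, of e] e by simp
  define \<iota> where "\<iota> = red (inverse e)"
  have \<iota>0: "\<iota> \<noteq> 0" unfolding \<iota>_def using rm_unit[OF rm ie] .
  define a' c' s' where "a' = red a" and "c' = red c" and "s' = red s"
  have c'0: "c' \<noteq> 0" unfolding c'_def using rm_unit[OF rm ch(3)] .
  have O_c: "av c \<le> 1" using ch by simp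
  have r1: "red (inverse e * (a*s+1)) = \<iota> * (a'*s'+1)"
  proof -
    have "av (a*s) \<le> 1" using O_mult[OF na ch(4) s1] .
    then have "av (a*s+1) \<le> 1" using O_add[OF na] av1 by simp
    then have "red (inverse e * (a*s+1)) = \<iota> * red (a*s+1)" unfolding \<iota>_def using rm_mult[OF rm] ie by simp
    also have "red (a*s+1) = red (a*s) + red 1" using rm_add[OF rm \<open>av (a*s) \<le> 1\<close>] av1 by simp
    also have "red (a*s) = a'*s'" unfolding a'_def s'_def using rm_mult[OF rm ch(4) s1] .
    finally show ?thesis using rm_one[OF rm] by simp
  qed
  have r2: "red (inverse e * (c*(a+s))) = \<iota> * (c'*(a'+s'))"
  proof -
    have as: "av (a+s) \<le> 1" using O_add[OF na ch(4) s1] .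
    then have "av (c*(a+s)) \<le> 1" using O_mult[OF na O_c] by simp
    then have "red (inverse e * (c*(a+s))) = \<iota> * red (c*(a+s))" unfolding \<iota>_def using rm_mult[OF rm] ie by simp
    also have "red (c*(a+s)) = c' * red (a+s)" unfolding c'_def using rm_mult[OF rm O_c as] .
    also have "red (a+s) = a'+s'" unfolding a'_def s'_def using rm_add[OF rm ch(4) s1] .
    finally show ?thesis .
  qed
  have r3: "red (inverse e * c^2) = \<iota> * c'^2"
  proof -
    have "red (inverse e * c^2) = \<iota> * red (c^2)" unfolding \<iota>_def using rm_mult[OF rm] ie avc2 by simp
    also have "red (c^2) = c'^2" unfolding c'_def power2_eq_square using rm_mult[OF rm O_c O_c] .
    finally show ?thesis .
  qed
  have r4: "red (inverse e * (a*c)) = \<iota> * (a'*c')"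
  proof -
    have "av (a*c) \<le> 1" using O_mult[OF na ch(4) O_c] .
    then have "red (inverse e * (a*c)) = \<iota> * red (a*c)" unfolding \<iota>_def using rm_mult[OF rm] ie by simp
    also have "red (a*c) = a'*c'" unfolding a'_def c'_def using rm_mult[OF rm ch(4) O_c] .
    finally show ?thesis .
  qed
  define N0 where "N0 = [:a'*s'+1, c'*(a'+s'), c'^2:]"
  define D0 where "D0 = [:a'*c', c'^2:]"
  have R1: "map_poly red (smult (inverse e) F) = [:\<iota>:] * N0"
    unfolding F_def N0_def map_red3[OF rm] r1 r2 r3 by simp
  have R2: "map_poly red (smult (inverse e) G) = [:\<iota>:] * D0"
    unfolding G_def D0_def map_red2[OF rm] r3 r4 by simp
  have red_eq: "reduction av red (phi_map s) (zeta_G av) = lowest_terms ([:\<iota>:] * N0, [:\<iota>:] * D0)"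
    unfolding reduction_def ch(1) using cj e(2) R1 R2 by simp
  have bez: "N0 * 1 + D0 * (- [:s'/c', 1:]) = 1"
    unfolding N0_def D0_def using c'0 by (simp add: algebra_simps power2_eq_square field_simps)
  have N0nz: "N0 \<noteq> 0" "D0 \<noteq> 0" unfolding N0_def D0_def using c'0 by auto
  obtain k where k: "is_unit k" "reduction av red (phi_map s) (zeta_G av) = (k*N0, k*D0)"
    using lowest_terms_char[OF bez N0nz, of "[:\<iota>:]"] \<iota>0 red_eq by auto
  have "red_deg av red (phi_map s) (zeta_G av) = rat_deg (k*N0, k*D0)" unfolding red_deg_def k(2) ..
  also have "\<dots> = rat_deg (N0, D0)" by (rule rat_deg_unit[OF k(1)])
  also have "\<dots> = 2" unfolding rat_deg_def N0_def D0_def using c'0 by simp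
  finally have deg: "red_deg av red (phi_map s) (zeta_G av) = 2" .
  have fixed: "is_fixed av red (phi_map s) (zeta_G av)" unfolding is_fixed_def using T deg by simp
  have ev: "eval_P1 (reduction av red (phi_map s) (zeta_G av)) v = eval_P1 (N0, D0) v" for v
    unfolding k(2) eval_P1_unit[OF k(1)] ..
  have dirNone: "direction av red (zeta_G av) None = None" unfolding direction_def ch(1) by simp
  have fixNone: "eval_P1 (N0, D0) None = None" unfolding eval_P1_def N0_def D0_def using c'0 by simp
  have moved: "{v \<in> fix_dirs av red (phi_map s) (zeta_G av).
        eval_P1 (reduction av red (phi_map s) (zeta_G av)) v \<noteq> v} = {}"
  proof (cases "s = 0")
    case True
    then have "fix_dirs av red (phi_map s) (zeta_G av) = {None}"
      unfolding fix_dirs_def fixed_phi using dirNone by simp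
    then show ?thesis unfolding ev using fixNone by (intro filter_empty) simp
  next
    case False
    define y where "y = - inverse s"
    have sy: "s * y = -1" unfolding y_def using False by simp
    have "eval_P1 (N0, D0) (direction av red (zeta_G av) (Some y)) = direction av red (zeta_G av) (Some y)"
    proof (cases "av (y - a) \<le> av c")
      case False then show ?thesis unfolding direction_def ch(1) using fixNone by simp
    next
      case True
      define q where "q = (y - a) / c"
      define w where "w = red q"
      have dir: "direction av red (zeta_G av) (Some y) = Some w"
        unfolding direction_def ch(1) w_def q_def using True by simp
      have q1: "av q \<le> 1" unfolding q_def using True ch na_divide[OF na] by simp
      have yq: "y = a + c * q" unfolding q_def using ch(2) by simp
      have cq: "av (c*q) \<le> 1" using O_mult[OF na O_c q1] .
      have ry: "red y = a' + c' * w" unfolding yq a'_def c'_def w_def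
        using rm_add[OF rm ch(4) cq] rm_mult[OF rm O_c q1] by simp
      have y1: "av y \<le> 1" unfolding yq using O_add[OF na ch(4) cq] .
      have "av s * av y = 1" using na_mult[OF na, of s y] sy na_minus_one[OF na] by simp
      then have "av y = 1" using y1 s1 na_nonneg[OF na, of s] na_nonneg[OF na, of y]
        by (metis antisym mult_le_one mult.commute mult_left_le order.refl) 
      then have ry0: "red y \<noteq> 0" using rm_unit[OF rm] by blast
      have "red (s * y) = s' * red y" unfolding s'_def using rm_mult[OF rm s1 y1] .
      then have sry: "s' * (a' + c' * w) = -1" using sy ry rm_uminus[OF na rm, of 1] av1 rm_one[OF rm] by simp
      have pD: "poly D0 w = c' * (a' + c' * w)" unfolding D0_def by (simp add: algebra_simps power2_eq_square)
      have pD0: "poly D0 w \<noteq> 0" using pD c'0 ry0 ry by simp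
      have "poly N0 w = w * poly D0 w + (s' * (a' + c' * w) + 1)"
        unfolding N0_def D0_def by (simp add: algebra_simps power2_eq_square)
      then have "poly N0 w = w * poly D0 w" using sry by simp
      then have "eval_P1 (N0, D0) (Some w) = Some w" unfolding eval_P1_def using pD0 by simp
      then show ?thesis using dir by simp
    qed
    moreover have "fix_dirs av red (phi_map s) (zeta_G av) = {None, direction av red (zeta_G av) (Some y)}"
      unfolding fix_dirs_def fixed_phi using dirNone False y_def by simp
    ultimately show ?thesis unfolding ev using fixNone by (intro filter_empty) simp
  qed
  have Nm: "N_moved av red (phi_map s) (zeta_G av) = 0" unfolding N_moved_def moved by simp
  have "weight av red (phi_map s) (zeta_G av) = 1" unfolding weight_def using fixed deg Nm by simp
  moreover have "W1 av red (phi_map s) (zeta_G av)" unfolding W1_def using fixed deg by simp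
  ultimately show ?thesis using T by simp
qed

section \<open>Case B\<close>

lemma caseB:
  fixes av :: "'k::field \<Rightarrow> real" and red :: "'k \<Rightarrow> 'r::field"
  assumes na: "nonarch_abs av" and rm: "residue_map av red" and l3: "1 < av l3"
    and sq: "s ^ 2 = 1 - l3"
  shows "disc av 0 (sqrt (av l3)) \<in> typeII av \<and> weight av red (phi_map s) (disc av 0 (sqrt (av l3))) = 1 \<and>
         W3 av red (phi_map s) (disc av 0 (sqrt (av l3)))"
proof -
  have av1: "av 1 = 1" by (rule na_one[OF na])
  have av0: "av 0 = 0" using na_zero[OF na, of 0] by simp
  have "av (1 + - l3) = av (- l3)" using na_strict[OF na, of 1 "-l3"] av1 l3 na_uminus[OF na, of l3] by simp
  then have "av (s^2) = av l3" using sq na_uminus[OF na, of l3] by simp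
  then have avs2: "av s ^ 2 = av l3" using na_power2[OF na, of s] by simp
  have avs_nn: "0 \<le> av s" using na_nonneg[OF na] .
  have sqrt_eq: "sqrt (av l3) = av s" using avs2[symmetric] avs_nn by simp
  have s1: "1 < av s" using l3 avs2 avs_nn
    by (metis less_1_mult not_less power2_eq_square mult_le_one)
  have s0: "s \<noteq> 0" using s1 av0 by auto
  define P0 where "P0 = disc av 0 (av s)"
  have P0eq: "disc av 0 (sqrt (av l3)) = P0" unfolding P0_def sqrt_eq ..
  have T: "P0 \<in> typeII av" unfolding P0_def typeII_def value_group_def
    using s0 by blast
  obtain a c where ch: "chart av P0 = (a,c)" "c \<noteq> 0" "av c = av s" "av a \<le> av s"
    using chart_disc[OF na s0] unfolding P0_def by auto
  define M where "M = av s ^ 2"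
  have M1: "1 < M" unfolding M_def using s1 by (metis less_1_mult power2_eq_square)
  define F where "F = [:a*s+1, c*(a+s), c^2:]"
  define G where "G = [:a*c, c^2:]"
  have cj: "conj_affine a c (phi_map s) = (F, G)" unfolding F_def G_def by (rule conj_phi)
  have avc2: "av (c^2) = M" using na_power2[OF na, of c] ch unfolding M_def by simp
  have avas: "av (a*s) \<le> M" unfolding M_def using na_mult[OF na, of a s] ch(4) avs_nn
    by (simp add: power2_eq_square mult_right_mono)
  have Fb: "\<forall>i. av (coeff F i) \<le> M" unfolding F_def
  proof (rule coeff_bound3)
    show "av (a*s+1) \<le> M" using na_add[OF na, of "a*s" 1] avas av1 M1 by simp
    have "av (a+s) \<le> av s" using na_add[OF na, of a s] ch(4) by simp
    then show "av (c*(a+s)) \<le> M" unfolding M_def using na_mult[OF na, of c "a+s"] ch(3) avs_nn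
      by (simp add: power2_eq_square mult_left_mono)
  qed (use avc2 av0 M1 in auto)
  have Gb: "\<forall>i. av (coeff G i) \<le> M" unfolding G_def
  proof (rule coeff_bound2)
    show "av (a*c) \<le> M" unfolding M_def using na_mult[OF na, of a c] ch(3,4) avs_nn
      by (simp add: power2_eq_square mult_right_mono)
  qed (use avc2 av0 M1 in auto)
  have j: "av (coeff F 2) = M" unfolding F_def using avc2 by (simp add: numeral_2_eq_2)
  obtain e where e: "av e = M" "normalize_lift av (F,G) = (smult (inverse e) F, smult (inverse e) G)"
    using normalize_lift_max[OF na Fb Gb j] M1 by auto
  have ie: "av (inverse e) < 1" using na_inverse[OF na, of e] e M1 by (simp add: inverse_less_1_iff)
  have ie1: "av (inverse e) \<le> 1" using ie by simp
  have e0: "e \<noteq> 0" using e M1 av0 by auto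
  define \<rho> where "\<rho> = c^2 * inverse e"
  define \<alpha>0 where "\<alpha>0 = a / c"
  define \<sigma>0 where "\<sigma>0 = s / c"
  have avc: "0 < av c" using ch s1 by simp
  have \<rho>1: "av \<rho> = 1" unfolding \<rho>_def using na_mult[OF na] na_inverse[OF na, of e] avc2 e M1 by simp
  have \<alpha>1: "av \<alpha>0 \<le> 1" unfolding \<alpha>0_def using na_divide[OF na, of a c] ch avc by simp
  have \<sigma>1: "av \<sigma>0 = 1" unfolding \<sigma>0_def using na_divide[OF na, of s c] ch avc by simp
  define u \<alpha> \<sigma> where "u = red \<rho>" and "\<alpha> = red \<alpha>0" and "\<sigma> = red \<sigma>0"
  have u0: "u \<noteq> 0" unfolding u_def using rm_unit[OF rm \<rho>1] .
  have \<sigma>0': "\<sigma> \<noteq> 0" unfolding \<sigma>_def using rm_unit[OF rm \<sigma>1] .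
  have O\<rho>: "av \<rho> \<le> 1" using \<rho>1 by simp
  have O\<sigma>: "av \<sigma>0 \<le> 1" using \<sigma>1 by simp
  have r1: "red (inverse e * (a*s+1)) = u * (\<alpha> * \<sigma>)"
  proof -
    have eq: "inverse e * (a*s+1) = \<rho> * (\<alpha>0 * \<sigma>0) + inverse e"
      unfolding \<rho>_def \<alpha>0_def \<sigma>0_def using ch(2) by (simp add: field_simps power2_eq_square add_divide_distrib)
    have "av (\<alpha>0 * \<sigma>0) \<le> 1" using O_mult[OF na \<alpha>1 O\<sigma>] .
    then have x1: "av (\<rho> * (\<alpha>0 * \<sigma>0)) \<le> 1" using O_mult[OF na O\<rho>] by simp
    have "red (inverse e * (a*s+1)) = red (\<rho> * (\<alpha>0 * \<sigma>0)) + red (inverse e)"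
      unfolding eq using rm_add[OF rm x1 ie1] .
    also have "red (inverse e) = 0" using rm_small[OF rm ie] .
    also have "red (\<rho> * (\<alpha>0 * \<sigma>0)) = u * (\<alpha> * \<sigma>)" unfolding u_def \<alpha>_def \<sigma>_def
      using rm_mult[OF rm O\<rho> \<open>av (\<alpha>0 * \<sigma>0) \<le> 1\<close>] rm_mult[OF rm \<alpha>1 O\<sigma>] by simp
    finally show ?thesis by simp
  qed
  have r2: "red (inverse e * (c*(a+s))) = u * (\<alpha> + \<sigma>)"
  proof -
    have eq: "inverse e * (c*(a+s)) = \<rho> * (\<alpha>0 + \<sigma>0)"
      unfolding \<rho>_def \<alpha>0_def \<sigma>0_def using ch(2) e0 by (simp add: field_simps power2_eq_square)
    have "av (\<alpha>0 + \<sigma>0) \<le> 1" using O_add[OF na \<alpha>1 O\<sigma>] .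
    then show ?thesis unfolding eq u_def \<alpha>_def \<sigma>_def
      using rm_mult[OF rm O\<rho>] rm_add[OF rm \<alpha>1 O\<sigma>] by simp
  qed
  have r3: "red (inverse e * c^2) = u" unfolding u_def \<rho>_def by (simp add: mult.commute)
  have r4: "red (inverse e * (a*c)) = u * \<alpha>"
  proof -
    have eq: "inverse e * (a*c) = \<rho> * \<alpha>0"
      unfolding \<rho>_def \<alpha>0_def using ch(2) e0 by (simp add: field_simps power2_eq_square)
    show ?thesis unfolding eq u_def \<alpha>_def using rm_mult[OF rm O\<rho> \<alpha>1] .
  qed
  define h where "h = [:u*\<alpha>, u:]"
  define N0 where "N0 = [:\<sigma>, 1:]"
  define D0 :: "'r poly" where "D0 = 1"
  have R1: "map_poly red (smult (inverse e) F) = h * N0"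
    unfolding F_def N0_def h_def map_red3[OF rm] r1 r2 r3 by (simp add: algebra_simps)
  have R2: "map_poly red (smult (inverse e) G) = h * D0"
    unfolding G_def D0_def h_def map_red2[OF rm] r3 r4 by simp
  have red_eq: "reduction av red (phi_map s) P0 = lowest_terms (h * N0, h * D0)"
    unfolding reduction_def ch(1) using cj e(2) R1 R2 by simp
  have bez: "N0 * 0 + D0 * 1 = 1" unfolding D0_def by simp
  have N0nz: "N0 \<noteq> 0" "D0 \<noteq> 0" "h \<noteq> 0" unfolding N0_def D0_def h_def using u0 by auto
  obtain k where k: "is_unit k" "reduction av red (phi_map s) P0 = (k*N0, k*D0)"
    using lowest_terms_char[OF bez N0nz] red_eq by auto
  have "red_deg av red (phi_map s) P0 = rat_deg (k*N0, k*D0)" unfolding red_deg_def k(2) ..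
  also have "\<dots> = rat_deg (N0, D0)" by (rule rat_deg_unit[OF k(1)])
  also have "\<dots> = 1" unfolding rat_deg_def N0_def D0_def by simp
  finally have deg: "red_deg av red (phi_map s) P0 = 1" .
  have fixed: "is_fixed av red (phi_map s) P0" unfolding is_fixed_def using T deg by simp
  have ev: "eval_P1 (reduction av red (phi_map s) P0) v = eval_P1 (N0, D0) v" for v
    unfolding k(2) eval_P1_unit[OF k(1)] ..
  have dirNone: "direction av red P0 None = None" unfolding direction_def ch(1) by simp
  have fixNone: "eval_P1 (N0, D0) None = None" unfolding eval_P1_def N0_def D0_def by simp
  define y where "y = - inverse s"
  have avy: "av y < 1" unfolding y_def using na_uminus[OF na] na_inverse[OF na, of s] s1
    by (simp add: inverse_less_1_iff)
  have "av (y - a) \<le> max (av y) (av a)" by (rule na_diff[OF na])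
  then have ya: "av (y - a) \<le> av c" using avy ch s1 by simp
  have "(y - a) / c = y / c - \<alpha>0" unfolding \<alpha>0_def by (simp add: diff_divide_distrib)
  moreover have yc: "av (y / c) < 1" using na_divide[OF na, of y c] avy ch s1 avc
    by (simp add: divide_less_eq_1)
  ultimately have "red ((y - a) / c) = - \<alpha>" unfolding \<alpha>_def
    using rm_diff[OF na rm _ \<alpha>1, of "y/c"] rm_small[OF rm yc] by simp
  then have dirY: "direction av red P0 (Some y) = Some (- \<alpha>)"
    unfolding direction_def ch(1) using ya by simp
  have FD: "fix_dirs av red (phi_map s) P0 = {None, Some (- \<alpha>)}"
    unfolding fix_dirs_def fixed_phi using dirNone dirY s0 y_def by simp
  have movY: "eval_P1 (N0, D0) (Some (- \<alpha>)) = Some (\<sigma> - \<alpha>)"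
    unfolding eval_P1_def N0_def D0_def by simp
  have moved: "{v \<in> fix_dirs av red (phi_map s) P0.
        eval_P1 (reduction av red (phi_map s) P0) v \<noteq> v} = {Some (- \<alpha>)}"
    unfolding FD ev using fixNone movY \<sigma>0' by auto
  have Nm: "N_moved av red (phi_map s) P0 = 1" unfolding N_moved_def moved by simp
  have W: "weight av red (phi_map s) P0 = 1" unfolding weight_def using fixed deg Nm by simp
  have G: "in_Gamma_Fix av red (phi_map s) P0" unfolding in_Gamma_Fix_def FD using T by simp
  have conj: "\<forall>v. eval_P1 (reduction av red (phi_map s) P0) (eval_P1 ([:0, 1:], [:1:]) v)
             = eval_P1 ([:0, 1:], [:1:]) (eval_P1 ([:\<sigma>, 1:], [:1:]) v)"
  proof
    fix v :: "'r option"
    show "eval_P1 (reduction av red (phi_map s) P0) (eval_P1 ([:0, 1:], [:1:]) v)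
             = eval_P1 ([:0, 1:], [:1:]) (eval_P1 ([:\<sigma>, 1:], [:1:]) v)"
      unfolding ev by (cases v) (simp_all add: eval_P1_def N0_def D0_def algebra_simps)
  qed
  have ex: "\<exists>\<alpha> \<beta> \<gamma> \<delta>. \<alpha> * \<delta> - \<beta> * \<gamma> \<noteq> 0 \<and>
        (\<forall>v. eval_P1 (reduction av red (phi_map s) P0) (eval_P1 ([:\<beta>, \<alpha>:], [:\<delta>, \<gamma>:]) v)
             = eval_P1 ([:\<beta>, \<alpha>:], [:\<delta>, \<gamma>:]) (eval_P1 ([:\<sigma>, 1:], [:1:]) v))"
    by (rule exI[of _ 1], rule exI[of _ 0], rule exI[of _ 0], rule exI[of _ 1]) (use conj in simp)
  have "W3 av red (phi_map s) P0" unfolding W3_def using fixed G ex \<sigma>0' by blast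
  then show ?thesis using T W P0eq by simp
qed

theorem proposition3p1:
  fixes av :: "'k::field \<Rightarrow> real" and red :: "'k \<Rightarrow> 'r::field"
    and l3 s :: 'k and \<xi> :: "'k set"
  assumes "nonarch_abs av" and "complete_abs av" and "alg_closed TYPE('k)"
    and "residue_map av red"
    and "s ^ 2 = 1 - l3"
    and "\<xi> \<in> typeII av" and "weight av red (phi_map s) \<xi> = 1"
    and "\<forall>P \<in> typeII av. weight av red (phi_map s) P = 1 \<longrightarrow> P = \<xi>"
  shows "(av l3 \<le> 1 \<longrightarrow> \<xi> = zeta_G av \<and> W1 av red (phi_map s) \<xi>) \<and>
         (1 < av l3 \<longrightarrow> \<xi> = disc av 0 (sqrt (av l3)) \<and> W3 av red (phi_map s) \<xi>)"
proof (intro conjI impI)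
  assume l: "av l3 \<le> 1"
  have "av (s^2) \<le> 1" using na_diff[OF assms(1), of 1 l3] na_one[OF assms(1)] l assms(5) by simp
  then have "av s ^ 2 \<le> 1" using na_power2[OF assms(1), of s] by simp
  then have s1: "av s \<le> 1" using na_nonneg[OF assms(1), of s] by (simp add: power_le_one_iff)
  have A: "zeta_G av \<in> typeII av \<and> weight av red (phi_map s) (zeta_G av) = 1 \<and>
         W1 av red (phi_map s) (zeta_G av)" by (rule caseA[OF assms(1) assms(4) s1])
  then have "zeta_G av = \<xi>" using assms(8) by blast
  then show "\<xi> = zeta_G av" by simp
  show "W1 av red (phi_map s) \<xi>" using A \<open>zeta_G av = \<xi>\<close> by simp
next
  assume l: "1 < av l3"
  have B: "disc av 0 (sqrt (av l3)) \<in> typeII av \<and> weight av red (phi_map s) (disc av 0 (sqrt (av l3))) = 1 \<and>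
         W3 av red (phi_map s) (disc av 0 (sqrt (av l3)))" by (rule caseB[OF assms(1) assms(4) l assms(5)])
  then have e: "disc av 0 (sqrt (av l3)) = \<xi>" using assms(8) by blast
  then show "\<xi> = disc av 0 (sqrt (av l3))" by simp
  show "W3 av red (phi_map s) \<xi>" using B e by simp
qed

end
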